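(* For every integer $n\geq 3$, the cycle $C_n$ on $n$ vertices satisfies $\operatorname{th}_{\operatorname{H}}(C_n)=\lceil 2\sqrt{n-2}+1\rceil$.
   Context: All graphs are finite, simple and undirected. Hopping color change rule: a blue vertex $v$ may force a white vertex $w$ to become blue if $v$ has not previously performed a force and every neighbor of $v$ is blue. For an initial blue set $B$, a chronological list of forces of $B$ is a sequence of such forces applied one at a time until no further force is possible; its underlying unordered set is a set of forces of $B$. $B$ is a hopping forcing set if some chronological list of forces of $B$ turns all vertices blue. For a set of forces $\mathcal F$ of $B$, let $\mathcal F^{(0)}=B$ and for $t\geq1$ let $\mathcal F^{(t)}$ be the set of vertices $w\notin U_{t-1}:=\bigcup_{i=0}^{t-1}\mathcal F^{(i)}$ for which there is $(v\to w)\in\mathcal F$ with $v\in U_{t-1}$ and all neighbors of $v$ in $U_{t-1}$. $\operatorname{pt}_{\operatorname{H}}(G;\mathcal F)$ is the least $t$ with $\bigcup_{i=0}^t\mathcal F^{(i)}=V(G)$ ($\infty$ if none); $\operatorname{pt}_{\operatorname{H}}(G;B)$ is the minimum of $\operatorname{pt}_{\operatorname{H}}(G;\mathcal F)$ over sets of forces $\mathcal F$ of $B$ ($\infty$ if $B$ is not a hopping forcing set). $\operatorname{th}_{\operatorname{H}}(G)=\min_{B\subseteq V(G)}\big(|B|+\operatorname{pt}_{\operatorname{H}}(G;B)\big)$. *)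

theory Defs
  imports Complex_Main "HOL-Library.Extended_Nat"
begin

text \<open>A graph is given by a finite vertex set V and a symmetric irreflexive
adjacency relation E; neighbours of v are the u in V with E v u.\<close>

text \<open>Hopping colour change rule: with current blue set S and the set P of
vertices that have already forced, v can force w.\<close>
definition can_force :: "('a \<Rightarrow> 'a \<Rightarrow> bool) \<Rightarrow> 'a set \<Rightarrow> 'a set \<Rightarrow> 'a set \<Rightarrow> 'a \<Rightarrow> 'a \<Rightarrow> bool" where
  "can_force E V S P v w \<longleftrightarrow>
     v \<in> S \<and> v \<notin> P \<and> w \<in> V \<and> w \<notin> S \<and> (\<forall>u\<in>V. E v u \<longrightarrow> u \<in> S)"

fun hop_valid :: "('a \<Rightarrow> 'a \<Rightarrow> bool) \<Rightarrow> 'a set \<Rightarrow> 'a set \<Rightarrow> 'a set \<Rightarrow> ('a \<times> 'a) list \<Rightarrow> bool" where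
  "hop_valid E V S P [] = True"
| "hop_valid E V S P ((v, w) # fs) =
     (can_force E V S P v w \<and> hop_valid E V (insert w S) (insert v P) fs)"

definition chron_list :: "('a \<Rightarrow> 'a \<Rightarrow> bool) \<Rightarrow> 'a set \<Rightarrow> 'a set \<Rightarrow> ('a \<times> 'a) list \<Rightarrow> bool" where
  "chron_list E V B fs \<longleftrightarrow>
     hop_valid E V B {} fs \<and>
     \<not> (\<exists>v w. can_force E V (B \<union> snd ` set fs) (fst ` set fs) v w)"

definition set_of_forces :: "('a \<Rightarrow> 'a \<Rightarrow> bool) \<Rightarrow> 'a set \<Rightarrow> 'a set \<Rightarrow> ('a \<times> 'a) set \<Rightarrow> bool" where
  "set_of_forces E V B F \<longleftrightarrow> (\<exists>fs. chron_list E V B fs \<and> F = set fs)"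

definition hopping_forcing_set :: "('a \<Rightarrow> 'a \<Rightarrow> bool) \<Rightarrow> 'a set \<Rightarrow> 'a set \<Rightarrow> bool" where
  "hopping_forcing_set E V B \<longleftrightarrow>
     B \<subseteq> V \<and> (\<exists>fs. chron_list E V B fs \<and> B \<union> snd ` set fs = V)"

text \<open>U t = union of F^(0), ..., F^(t).\<close>
fun hop_U :: "('a \<Rightarrow> 'a \<Rightarrow> bool) \<Rightarrow> 'a set \<Rightarrow> 'a set \<Rightarrow> ('a \<times> 'a) set \<Rightarrow> nat \<Rightarrow> 'a set" where
  "hop_U E V B F 0 = B"
| "hop_U E V B F (Suc t) = hop_U E V B F t \<union>
     {w. w \<notin> hop_U E V B F t \<and> (\<exists>v. (v, w) \<in> F \<and> v \<in> hop_U E V B F t \<and>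
          (\<forall>u\<in>V. E v u \<longrightarrow> u \<in> hop_U E V B F t))}"

definition pt_H_forces :: "('a \<Rightarrow> 'a \<Rightarrow> bool) \<Rightarrow> 'a set \<Rightarrow> 'a set \<Rightarrow> ('a \<times> 'a) set \<Rightarrow> enat" where
  "pt_H_forces E V B F =
     (if \<exists>t. hop_U E V B F t = V then enat (LEAST t. hop_U E V B F t = V) else \<infinity>)"

definition pt_H :: "('a \<Rightarrow> 'a \<Rightarrow> bool) \<Rightarrow> 'a set \<Rightarrow> 'a set \<Rightarrow> enat" where
  "pt_H E V B =
     (if hopping_forcing_set E V B
      then (INF F \<in> {F. set_of_forces E V B F}. pt_H_forces E V B F)
      else \<infinity>)"

definition th_H :: "('a \<Rightarrow> 'a \<Rightarrow> bool) \<Rightarrow> 'a set \<Rightarrow> enat" where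
  "th_H E V = (INF B \<in> Pow V. enat (card B) + pt_H E V B)"

definition cycle_adj :: "nat \<Rightarrow> nat \<Rightarrow> nat \<Rightarrow> bool" where
  "cycle_adj n i j \<longleftrightarrow> i < n \<and> j < n \<and> (j = (i + 1) mod n \<or> i = (j + 1) mod n)"

end

theory Submission
  imports Defs
begin

definition cl :: "nat \<Rightarrow> nat set \<Rightarrow> nat set" where
  "cl n U = {v\<in>U. \<forall>u\<in>{..<n}. cycle_adj n v u \<longrightarrow> u \<in> U}"

lemma cl_sub: "cl n U \<subseteq> U" unfolding cl_def by auto

lemma cl_mono: "U \<subseteq> W \<Longrightarrow> cl n U \<subseteq> cl n W" unfolding cl_def by auto

lemma cl_succ: "x \<in> cl n U \<Longrightarrow> x < n \<Longrightarrow> (x+1) mod n \<in> U"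
  unfolding cl_def cycle_adj_def by auto

lemma cl_pred: "x \<in> cl n U \<Longrightarrow> x < n \<Longrightarrow> (y+1) mod n = x \<Longrightarrow> y < n \<Longrightarrow> y \<in> U"
  unfolding cl_def cycle_adj_def by auto

lemma cycle_all:
  assumes U: "U \<subseteq> {..<n}" and z: "z \<in> U" and u: "u \<in> U" "u \<noteq> z"
    and h: "\<forall>x\<in>U. x \<noteq> z \<longrightarrow> x \<in> cl n U"
  shows "U = {..<n}"
proof -
  have n: "0 < n" using U z by auto
  have zn: "z < n" using U z by auto
  define Q where "Q i \<longleftrightarrow> (z+i) mod n \<in> U" for i
  have step: "Q (i+1) \<and> Q (i-1)" if "1 \<le> i" "i \<le> n-1" "Q i" for i
  proof -
    define x where "x = (z+i) mod n"
    have xU: "x \<in> U" using that Q_def x_def by auto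
    have xn: "x < n" using n x_def by auto
    have "x \<noteq> z"
    proof
      assume "x = z"
      then have e: "(z+i) mod n = z" using x_def by simp
      show False
      proof (cases "z+i < n")
        case True then show False using e that by simp
      next
        case False
        then have "(z+i) mod n = (z+i-n) mod n" by (simp add: le_mod_geq)
        also have "\<dots> = z+i-n" using zn that by simp
        finally show False using e that False by simp
      qed
    qed
    then have xc: "x \<in> cl n U" using h xU by auto
    have "(x+1) mod n = (z+(i+1)) mod n" unfolding x_def by (simp add: mod_add_left_eq add.assoc mod_Suc_eq)
    then have 1: "Q (i+1)" using cl_succ[OF xc xn] Q_def by simp
    have "((z+(i-1)) mod n + 1) mod n = x" unfolding x_def using that
      by (simp add: mod_add_left_eq add.assoc mod_Suc_eq)
    then have 2: "Q (i-1)" using cl_pred[OF xc xn] Q_def n by auto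
    show ?thesis using 1 2 by simp
  qed
  define i0 where "i0 = (u + n - z) mod n"
  have ui: "(z + i0) mod n = u"
  proof -
    have un: "u < n" using u U by auto
    have "(z + i0) mod n = (z + (u + n - z)) mod n" unfolding i0_def by (simp add: mod_add_right_eq)
    also have "z + (u + n - z) = u + n" using zn by simp
    finally show ?thesis using un by simp
  qed
  have i0n: "i0 \<le> n-1" unfolding i0_def using n mod_less_divisor[OF n, of "u+n-z"] by linarith
  have i01: "1 \<le> i0"
  proof (rule ccontr)
    assume "\<not> 1 \<le> i0" then have "i0 = 0" by simp
    then show False using ui zn u by simp
  qed
  have Qi0: "Q i0" using ui u Q_def by simp
  have fw: "\<forall>j. i0 + j \<le> n - 1 \<longrightarrow> Q (i0+j)"
  proof
    fix j show "i0 + j \<le> n - 1 \<longrightarrow> Q (i0+j)"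
      by (induction j) (use Qi0 step i01 in \<open>auto\<close>)
  qed
  have bw: "\<forall>j. j < i0 \<longrightarrow> Q (i0-j)"
  proof
    fix j show "j < i0 \<longrightarrow> Q (i0-j)"
    proof (induction j)
      case 0 then show ?case using Qi0 by simp
    next
      case (Suc j)
      show ?case
      proof
        assume a: "Suc j < i0"
        then have "Q (i0 - j)" using Suc by simp
        then have "Q (i0 - j - 1)" using step[of "i0-j"] a i0n by auto
        thus "Q (i0 - Suc j)" by simp
      qed
    qed
  qed
  have allQ: "Q i" if "i < n" for i
  proof (cases "i = 0")
    case True then show ?thesis using z zn Q_def by simp
  next
    case False
    show ?thesis
    proof (cases "i0 \<le> i")
      case True then show ?thesis using fw[rule_format, of "i - i0"] that by auto
    next
      case f: False then show ?thesis using bw[rule_format, of "i0 - i"] False by auto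
    qed
  qed
  show ?thesis
  proof
    show "{..<n} \<subseteq> U"
    proof
      fix x assume x: "x \<in> {..<n}"
      have "(z + (x + n - z) mod n) mod n = x"
        using x zn by (simp add: mod_add_right_eq)
      then show "x \<in> U" using allQ[of "(x + n - z) mod n"] n Q_def by auto
    qed
  qed (use U in auto)
qed


lemma card_cl:
  assumes U: "U \<subseteq> {..<n}" and ne: "U \<noteq> {..<n}" and c: "2 \<le> card U"
  shows "card (cl n U) + 2 \<le> card U"
proof -
  have fin: "finite U" using U finite_subset by blast
  have "2 \<le> card (U - cl n U)"
  proof (rule ccontr)
    assume "\<not> 2 \<le> card (U - cl n U)"
    then have le1: "card (U - cl n U) \<le> 1" by simp
    obtain z where z: "z \<in> U" "U - cl n U \<subseteq> {z}"
    proof (cases "card (U - cl n U) = 0")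
      case True
      then have "U - cl n U = {}" using fin by simp
      moreover obtain z where "z \<in> U" using c by fastforce
      ultimately show ?thesis using that by blast
    next
      case False
      then have "card (U - cl n U) = 1" using le1 by simp
      then obtain z where "U - cl n U = {z}" by (rule card_1_singletonE)
      then show ?thesis using that by blast
    qed
    have "U \<noteq> {z}" using c by auto
    then obtain u where u: "u \<in> U" "u \<noteq> z" using z by blast
    have "U = {..<n}" by (rule cycle_all[OF U z(1) u]) (use z in blast)
    then show False using ne by simp
  qed
  moreover have "card (U - cl n U) = card U - card (cl n U)"
    using card_Diff_subset[OF finite_subset[OF cl_sub fin] cl_sub] .
  moreover have "card (cl n U) \<le> card U" using card_mono[OF fin cl_sub] .
  ultimately show ?thesis by linarith
qed

lemma hop_mono_le: "t \<le> t' \<Longrightarrow> hop_U E V B F t \<subseteq> hop_U E V B F t'"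
  by (rule lift_Suc_mono_le[of "hop_U E V B F"]) auto

lemma hop_sub: "B \<subseteq> V \<Longrightarrow> snd ` F \<subseteq> V \<Longrightarrow> hop_U E V B F t \<subseteq> V"
  by (induction t) force+

lemma hop_B: "B \<subseteq> hop_U E V B F t"
  using hop_mono_le[of 0 t E V B F] by simp

lemma hop_Suc_cl: "hop_U (cycle_adj n) {..<n} B F (Suc t) = hop_U (cycle_adj n) {..<n} B F t \<union>
  {w. w \<notin> hop_U (cycle_adj n) {..<n} B F t \<and> (\<exists>v. (v,w) \<in> F \<and> v \<in> cl n (hop_U (cycle_adj n) {..<n} B F t))}"
  by (simp add: cl_def)

lemma hop_forcer:
  "w \<in> hop_U (cycle_adj n) {..<n} B F (Suc t) - B \<Longrightarrow>
     \<exists>v. (v,w) \<in> F \<and> v \<in> cl n (hop_U (cycle_adj n) {..<n} B F t)"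
proof (induction t arbitrary: w)
  case 0
  then show ?case unfolding hop_Suc_cl by auto
next
  case (Suc t)
  show ?case
  proof (cases "w \<in> hop_U (cycle_adj n) {..<n} B F (Suc t)")
    case True
    then obtain v where "(v,w) \<in> F" "v \<in> cl n (hop_U (cycle_adj n) {..<n} B F t)"
      using Suc by blast
    moreover have "cl n (hop_U (cycle_adj n) {..<n} B F t) \<subseteq> cl n (hop_U (cycle_adj n) {..<n} B F (Suc t))"
      by (rule cl_mono) (rule hop_mono_le, simp)
    ultimately show ?thesis by blast
  next
    case False
    then show ?thesis using Suc.prems unfolding hop_Suc_cl[of n B F "Suc t"] by blast
  qed
qed

lemma hop_card:
  assumes inj: "inj_on fst F" and B: "B \<subseteq> {..<n}" and Fs: "snd ` F \<subseteq> {..<n}"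
  shows "card (hop_U (cycle_adj n) {..<n} B F (Suc t)) \<le> card B + card (cl n (hop_U (cycle_adj n) {..<n} B F t))"
proof -
  let ?H = "hop_U (cycle_adj n) {..<n} B F"
  define A where "A = ?H (Suc t) - B"
  define C where "C = cl n (?H t)"
  define g where "g w = (SOME v. (v,w) \<in> F \<and> v \<in> C)" for w
  have g: "(g w, w) \<in> F \<and> g w \<in> C" if "w \<in> A" for w
    unfolding g_def using someI_ex[OF hop_forcer[of w n B F t]] that A_def C_def by blast
  have "inj_on g A"
  proof
    fix x y assume xy: "x \<in> A" "y \<in> A" "g x = g y"
    have p: "(g x,x)\<in>F" "(g y, y)\<in>F" using g[OF xy(1)] g[OF xy(2)] by blast+
    have "fst (g x,x) = fst (g y,y)" using xy by simp
    then have "(g x, x) = (g y, y)" using inj_onD[OF inj _ p] by blast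
    then show "x = y" by simp
  qed
  moreover have "g ` A \<subseteq> C" using g by blast
  moreover have "finite C" unfolding C_def
    using finite_subset[OF subset_trans[OF cl_sub hop_sub[OF B Fs]]] by blast
  ultimately have cA: "card A \<le> card C" by (rule card_inj_on_le)
  have fB: "finite B" using B finite_subset by blast
  have "?H (Suc t) \<subseteq> B \<union> A" unfolding A_def by blast
  then have "card (?H (Suc t)) \<le> card (B \<union> A)"
  proof (rule card_mono[rotated])
    have "finite (?H (Suc t))" by (rule finite_subset[OF hop_sub[OF B Fs]]) simp
    then show "finite (B \<union> A)" using fB A_def by simp
  qed
  also have "\<dots> \<le> card B + card A" by (rule card_Un_le)
  finally show ?thesis using cA C_def by simp
qed

lemma cl_small:
  assumes "card B \<le> 1" "2 \<le> n" "B \<subseteq> {..<n}"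
  shows "cl n B = {}"
proof (rule ccontr)
  assume "cl n B \<noteq> {}"
  then obtain x where x: "x \<in> cl n B" by blast
  have xn: "x < n" using x cl_sub assms(3) by blast
  have "(x+1) mod n \<in> B" using cl_succ[OF x xn] .
  moreover have "(x+1) mod n \<noteq> x"
  proof (cases "x + 1 < n")
    case True then show ?thesis by simp
  next
    case False then have "x + 1 = n" using xn by simp
    then show ?thesis using assms(2) by simp
  qed
  moreover have "x \<in> B" using x cl_sub by blast
  moreover have "finite B" using assms(3) finite_subset by blast
  ultimately have "card {x, (x+1) mod n} \<le> card B" by (intro card_mono) auto
  then show False using \<open>(x+1) mod n \<noteq> x\<close> assms(1) by simp
qed

lemma hop_small:
  assumes "card B \<le> 1" "2 \<le> n" "B \<subseteq> {..<n}"
  shows "hop_U (cycle_adj n) {..<n} B F t = B"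
proof (induction t)
  case 0 show ?case by simp
next
  case (Suc t) show ?case unfolding hop_Suc_cl Suc.IH cl_small[OF assms] by auto
qed

lemma hop_bound:
  assumes inj: "inj_on fst F" and B: "B \<subseteq> {..<n}" and Fs: "snd ` F \<subseteq> {..<n}"
    and k: "2 \<le> card B"
  shows "(\<forall>j<t. hop_U (cycle_adj n) {..<n} B F j \<noteq> {..<n}) \<Longrightarrow>
     card (hop_U (cycle_adj n) {..<n} B F t) \<le> card B + t * (card B - 2)"
proof (induction t)
  case 0 then show ?case by simp
next
  case (Suc t)
  let ?H = "hop_U (cycle_adj n) {..<n} B F"
  have IH: "card (?H t) \<le> card B + t * (card B - 2)" using Suc by simp
  have ne: "?H t \<noteq> {..<n}" using Suc.prems by simp
  have "card B \<le> card (?H t)"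
    by (rule card_mono[OF finite_subset[OF hop_sub[OF B Fs]] hop_B]) simp
  then have "card (cl n (?H t)) + 2 \<le> card (?H t)"
    using card_cl[OF hop_sub[OF B Fs] ne] k by simp
  then show ?case using hop_card[OF inj B Fs, of t] IH k by simp
qed



lemma arith_lower:
  fixes n k T :: nat
  assumes n3: "3 \<le> n" and k2: "2 \<le> k" and le: "n \<le> k + T*(k-2)"
  shows "nat \<lceil>2 * sqrt (real n - 2) + 1\<rceil> \<le> k + T"
proof -
  have "real n \<le> real k + real T * (real k - 2)"
    using le k2 by (metis of_nat_add of_nat_diff of_nat_le_iff of_nat_mult of_nat_numeral)
  then have m: "real n - 2 \<le> (real k - 2) * (real T + 1)" by (simp add: algebra_simps)
  have nn: "0 \<le> real k - 2" using k2 by simp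
  have n2: "0 \<le> real n - 2" using n3 by simp
  have sq: "(2*sqrt(real n - 2))^2 = 4*(real n - 2)" using n2 by (simp add: power_mult_distrib)
  have "4*(real n - 2) \<le> 4*((real k - 2) * (real T + 1))" using m by simp
  also have "\<dots> \<le> ((real k - 2) + (real T + 1))^2"
    using sum_squares_ge_zero[of "real k - 2 - (real T + 1)" 0]
    by (simp add: power2_eq_square algebra_simps)
  finally have "2*sqrt(real n - 2) \<le> (real k - 2) + (real T + 1)"
    using sq power2_le_imp_le[of "2*sqrt(real n - 2)"] nn by simp
  then have "2 * sqrt (real n - 2) + 1 \<le> of_int (int (k + T))" using k2 by simp
  then have "\<lceil>2 * sqrt (real n - 2) + 1\<rceil> \<le> int (k + T)" by (rule ceiling_le)
  then show ?thesis by simp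
qed

lemma arith_upper:
  fixes n :: nat
  assumes n3: "3 \<le> n"
  obtains k T where "3 \<le> k" "k \<le> n" "n \<le> k + T*(k-2)"
    "k + T = nat \<lceil>2 * sqrt (real n - 2) + 1\<rceil>"
proof -
  define m where "m = n - 2"
  have rm: "real n - 2 = real m" using n3 m_def by simp
  have m1: "1 \<le> m" using n3 m_def by simp
  define c where "c = nat \<lceil>2 * sqrt (real m)\<rceil>"
  have c0: "0 \<le> \<lceil>2 * sqrt (real m)\<rceil>"
  proof -
    have "0 \<le> 2 * sqrt (real m)" by simp
    from ceiling_mono[OF this] show ?thesis by simp
  qed
  have s: "nat \<lceil>2 * sqrt (real n - 2) + 1\<rceil> = c + 1"
    unfolding rm c_def using c0 by (simp add: nat_add_distrib)
  have rc: "real c = of_int \<lceil>2 * sqrt (real m)\<rceil>" unfolding c_def using c0 by simp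
  have cge: "2 * sqrt (real m) \<le> real c" unfolding rc by simp
  have clt: "real c < 2 * sqrt (real m) + 1" unfolding rc
    using ceiling_correct[of "2 * sqrt (real m)"] by simp
  have sm1: "1 \<le> sqrt (real m)" using m1 by simp
  have c2: "2 \<le> c" using cge sm1 by linarith
  have smm: "sqrt (real m) \<le> real m"
  proof -
    have "sqrt (real m) * 1 \<le> sqrt (real m) * sqrt (real m)"
      by (rule mult_left_mono) (use sm1 in auto)
    then show ?thesis by simp
  qed
  have c4: "4 * m \<le> c * c"
  proof -
    have "(2 * sqrt (real m))^2 \<le> (real c)^2"
      using cge by (intro power_mono) auto
    then have "4 * real m \<le> real c * real c" by (simp add: power_mult_distrib power2_eq_square)
    then show ?thesis by (metis of_nat_le_iff of_nat_mult of_nat_numeral)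
  qed
  define a where "a = c div 2"
  define b where "b = c - a"
  have ab: "m \<le> a * b"
  proof (cases "even c")
    case True
    then obtain j where j: "c = 2*j" by blast
    then have "a = j" "b = j" using a_def b_def by auto
    then show ?thesis using c4 j by (simp add: algebra_simps)
  next
    case False
    then obtain j where j: "c = 2*j+1" using oddE by blast
    then have aj: "a = j" "b = j+1" using a_def b_def by auto
    define p where "p = j*j + j"
    have "c * c = 4 * p + 1" using j p_def by (simp add: algebra_simps)
    then have "m \<le> p" using c4 by linarith
    then show ?thesis using aj p_def by (simp add: algebra_simps)
  qed
  have a1: "1 \<le> a" using c2 a_def by simp
  have b1: "1 \<le> b" using c2 a_def b_def by simp
  have "2 * real a \<le> real c" using a_def by linarith
  then have "real a < real m + 1" using clt smm by linarith
  then have am: "a \<le> m" by simp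
  show ?thesis
  proof (rule that[of "a+2" "b-1"])
    show "3 \<le> a + 2" using a1 by simp
    show "a + 2 \<le> n" using am m_def n3 by simp
    have "a * b = a + (b - 1) * a" using b1 by (cases b) auto
    then show "n \<le> a + 2 + (b - 1) * (a + 2 - 2)" using ab m_def n3 by simp
    show "a + 2 + (b - 1) = nat \<lceil>2 * sqrt (real n - 2) + 1\<rceil>"
      using s a_def b_def b1 c2 by simp
  qed
qed


lemma valid_props:
  "hop_valid E V S P fs \<Longrightarrow> distinct (map fst fs) \<and> (\<forall>p\<in>set fs. fst p \<notin> P \<and> snd p \<in> V)"
proof (induction E V S P fs rule: hop_valid.induct)
  case (1 E V S P) then show ?case by simp
next
  case (2 E V S P v w fs)
  then have cf: "can_force E V S P v w" and r: "hop_valid E V (insert w S) (insert v P) fs" by auto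
  then have IH: "distinct (map fst fs) \<and> (\<forall>p\<in>set fs. fst p \<notin> insert v P \<and> snd p \<in> V)"
    using 2 by simp
  have "v \<notin> set (map fst fs)" using IH by auto
  then show ?case using IH cf unfolding can_force_def by auto
qed

lemma lower_pt:
  assumes n3: "3 \<le> n" and B: "B \<subseteq> {..<n}"
  shows "enat (nat \<lceil>2 * sqrt (real n - 2) + 1\<rceil> - card B) \<le> pt_H (cycle_adj n) {..<n} B"
proof (cases "hopping_forcing_set (cycle_adj n) {..<n} B")
  case False then show ?thesis unfolding pt_H_def by simp
next
  case True
  let ?s = "nat \<lceil>2 * sqrt (real n - 2) + 1\<rceil>"
  have "enat (?s - card B) \<le> pt_H_forces (cycle_adj n) {..<n} B F"
    if F: "set_of_forces (cycle_adj n) {..<n} B F" for F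
  proof -
    obtain fs where fs: "chron_list (cycle_adj n) {..<n} B fs" "F = set fs"
      using F unfolding set_of_forces_def by blast
    have vp: "distinct (map fst fs) \<and> (\<forall>p\<in>set fs. fst p \<notin> {} \<and> snd p \<in> {..<n})"
      using fs(1) valid_props[of "cycle_adj n" "{..<n}" B "{}" fs] unfolding chron_list_def by blast
    have inj: "inj_on fst F" using vp fs(2) by (simp add: distinct_map)
    have Fs: "snd ` F \<subseteq> {..<n}" using vp fs(2) by auto
    let ?H = "hop_U (cycle_adj n) {..<n} B F"
    show ?thesis
    proof (cases "\<exists>t. ?H t = {..<n}")
      case False then show ?thesis unfolding pt_H_forces_def by simp
    next
      case True
      define T where "T = (LEAST t. ?H t = {..<n})"
      have HT: "?H T = {..<n}" unfolding T_def using LeastI_ex[OF True] .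
      have before: "\<forall>j<T. ?H j \<noteq> {..<n}" unfolding T_def using not_less_Least by blast
      have k2: "2 \<le> card B"
      proof (rule ccontr)
        assume "\<not> 2 \<le> card B"
        then have "?H T = B" using hop_small[of B n F T] n3 B by simp
        then have "B = {..<n}" using HT by simp
        then have "card B = n" by simp
        then show False using \<open>\<not> 2 \<le> card B\<close> n3 by simp
      qed
      have "n \<le> card B + T * (card B - 2)"
        using hop_bound[OF inj B Fs k2 before] HT by simp
      then have "?s \<le> card B + T" using arith_lower n3 k2 by blast
      then show ?thesis unfolding pt_H_forces_def T_def using True by simp
    qed
  qed
  then show ?thesis unfolding pt_H_def using True by (simp add: le_INF_iff)
qed

lemma lower_th:
  assumes n3: "3 \<le> n"
  shows "enat (nat \<lceil>2 * sqrt (real n - 2) + 1\<rceil>) \<le> th_H (cycle_adj n) {..<n}"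
  unfolding th_H_def
proof (rule INF_greatest)
  fix B assume "B \<in> Pow {..<n}"
  then have B: "B \<subseteq> {..<n}" by simp
  let ?s = "nat \<lceil>2 * sqrt (real n - 2) + 1\<rceil>"
  have "enat ?s \<le> enat (card B) + enat (?s - card B)" by simp
  also have "\<dots> \<le> enat (card B) + pt_H (cycle_adj n) {..<n} B"
    using lower_pt[OF n3 B] by (rule add_left_mono)
  finally show "enat ?s \<le> enat (card B) + pt_H (cycle_adj n) {..<n} B" .
qed


lemma nbr:
  assumes "1 \<le> v" "v+1 < n" "cycle_adj n v u"
  shows "u = v-1 \<or> u = v+1"
proof -
  have u: "u < n" and d: "u = (v+1) mod n \<or> v = (u+1) mod n" using assms(3) unfolding cycle_adj_def by auto
  show ?thesis
  proof (cases "u = (v+1) mod n")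
    case True then show ?thesis using assms(2) by simp
  next
    case False
    then have e: "v = (u+1) mod n" using d by simp
    show ?thesis
    proof (cases "u+1 < n")
      case True then show ?thesis using e by simp
    next
      case False then have "u+1 = n" using u by simp
      then show ?thesis using e assms(1) by simp
    qed
  qed
qed

definition fsk :: "nat \<Rightarrow> nat \<Rightarrow> (nat \<times> nat) list" where
  "fsk n k = map (\<lambda>j. (j+1, k+j)) [0..<n-k]"

lemma valid_constr:
  assumes k3: "3 \<le> k" and kn: "k \<le> n"
  shows "n - k - i = d \<Longrightarrow> i \<le> n-k \<Longrightarrow>
    hop_valid (cycle_adj n) {..<n} {..<k+i} {Suc 0..i} (map (\<lambda>j. (j+1,k+j)) [i..<n-k])"
proof (induction d arbitrary: i)
  case 0
  then have "i = n - k" by simp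
  then show ?case by simp
next
  case (Suc d)
  then have i: "i < n - k" by simp
  have cf: "can_force (cycle_adj n) {..<n} {..<k+i} {Suc 0..i} (i+1) (k+i)"
    unfolding can_force_def
  proof (intro conjI ballI impI)
    fix u assume "u \<in> {..<n}" "cycle_adj n (i+1) u"
    then have "u = i \<or> u = i+2" using nbr[of "i+1" n u] i k3 by auto
    then show "u \<in> {..<k+i}" using k3 by auto
  qed (use i k3 in auto)
  have IH: "hop_valid (cycle_adj n) {..<n} {..<k+Suc i} {Suc 0..Suc i} (map (\<lambda>j. (j+1,k+j)) [Suc i..<n-k])"
    using Suc.IH[of "Suc i"] Suc.prems by simp
  have e1: "insert (k+i) {..<k+i} = {..<k+Suc i}" by auto
  have e2: "insert (Suc i) {Suc 0..i} = {Suc 0..Suc i}" by auto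
  show ?case using cf IH i by (simp add: upt_conv_Cons e1 e2)
qed

lemma fsk_snd: "k \<le> n \<Longrightarrow> snd ` set (fsk n k) = {k..<n}"
proof
  show "snd ` set (fsk n k) \<subseteq> {k..<n}" unfolding fsk_def by auto
  assume kn: "k \<le> n"
  show "{k..<n} \<subseteq> snd ` set (fsk n k)"
  proof
    fix x assume x: "x \<in> {k..<n}"
    have m: "(x-k+1, k+(x-k)) \<in> set (fsk n k)" unfolding fsk_def set_map
      by (rule rev_image_eqI[of "x-k"]) (use x in auto)
    have "x = snd (x-k+1, k+(x-k))" using x by simp
    then show "x \<in> snd ` set (fsk n k)" using m by (rule image_eqI)
  qed
qed

lemma fsk_chron:
  assumes k3: "3 \<le> k" and kn: "k \<le> n"
  shows "chron_list (cycle_adj n) {..<n} {..<k} (fsk n k)"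
    and "{..<k} \<union> snd ` set (fsk n k) = {..<n}"
proof -
  show eq: "{..<k} \<union> snd ` set (fsk n k) = {..<n}" using fsk_snd[OF kn] kn by auto
  have "hop_valid (cycle_adj n) {..<n} {..<k+0} {Suc 0..0} (fsk n k)"
    unfolding fsk_def by (rule valid_constr[OF k3 kn]) auto
  then show "chron_list (cycle_adj n) {..<n} {..<k} (fsk n k)"
    unfolding chron_list_def can_force_def using eq by auto
qed

lemma cover:
  assumes k3: "3 \<le> k" and kn: "k \<le> n"
  shows "{..<min n (k + t*(k-2))} \<subseteq> hop_U (cycle_adj n) {..<n} {..<k} (set (fsk n k)) t"
proof (induction t)
  case 0 then show ?case using kn by auto
next
  case (Suc t)
  let ?H = "hop_U (cycle_adj n) {..<n} {..<k} (set (fsk n k))"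
  let ?m = "min n (k + t*(k-2))"
  show ?case
  proof
    fix w assume w: "w \<in> {..<min n (k + Suc t*(k-2))}"
    show "w \<in> ?H (Suc t)"
    proof (cases "w < ?m")
      case True
      then have "w \<in> ?H t" using Suc.IH by blast
      moreover have "?H t \<subseteq> ?H (Suc t)" by (rule hop_mono_le) simp
      ultimately show ?thesis by blast
    next
      case False
      have wn: "w < n" and wk: "w < k + Suc t * (k-2)" using w by auto
      have kw: "k \<le> w" using False kn by auto
      define v where "v = w - k + 1"
      have vF: "(v, w) \<in> set (fsk n k)" unfolding fsk_def set_map
        by (rule rev_image_eqI[of "w-k"]) (use wn kw v_def in auto)
      have v1: "v + 1 < ?m" using wn wk kw k3 unfolding v_def by (auto simp: algebra_simps)
      have vH: "v \<in> ?H t" using v1 Suc.IH by auto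
      have nb: "\<forall>u\<in>{..<n}. cycle_adj n v u \<longrightarrow> u \<in> ?H t"
      proof (intro ballI impI)
        fix u assume "u \<in> {..<n}" "cycle_adj n v u"
        then have "u = v - 1 \<or> u = v + 1" using nbr[of v n u] v_def v1 by auto
        then have "u < ?m" using v1 by auto
        then show "u \<in> ?H t" using Suc.IH by auto
      qed
      show ?thesis using vF vH nb by auto
    qed
  qed
qed

lemma upper_th:
  assumes k3: "3 \<le> k" and kn: "k \<le> n" and le: "n \<le> k + T*(k-2)"
  shows "th_H (cycle_adj n) {..<n} \<le> enat (k + T)"
proof -
  let ?F = "set (fsk n k)"
  let ?H = "hop_U (cycle_adj n) {..<n} {..<k} ?F"
  have hfs: "hopping_forcing_set (cycle_adj n) {..<n} {..<k}"
    unfolding hopping_forcing_set_def using fsk_chron[OF k3 kn] kn by auto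
  have sof: "set_of_forces (cycle_adj n) {..<n} {..<k} ?F"
    unfolding set_of_forces_def using fsk_chron[OF k3 kn] by blast
  have Fs: "snd ` ?F \<subseteq> {..<n}" using fsk_snd[OF kn] by auto
  have HT: "?H T = {..<n}"
  proof
    show "?H T \<subseteq> {..<n}" by (rule hop_sub[OF _ Fs]) (use kn in auto)
    show "{..<n} \<subseteq> ?H T" using cover[OF k3 kn, of T] le by (simp add: min_absorb1)
  qed
  have "pt_H_forces (cycle_adj n) {..<n} {..<k} ?F \<le> enat T"
    unfolding pt_H_forces_def using HT by (auto intro: Least_le)
  then have pt: "pt_H (cycle_adj n) {..<n} {..<k} \<le> enat T"
    unfolding pt_H_def using hfs sof by (auto intro: INF_lower2)
  have "th_H (cycle_adj n) {..<n} \<le> enat (card {..<k}) + pt_H (cycle_adj n) {..<n} {..<k}"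
    unfolding th_H_def by (rule INF_lower) (use kn in auto)
  also have "\<dots> \<le> enat k + enat T" unfolding card_lessThan by (rule add_left_mono[OF pt])
  finally show ?thesis by simp
qed

theorem proposition3p6:
  fixes n :: nat
  assumes "n \<ge> 3"
  shows "th_H (cycle_adj n) {..<n} = enat (nat \<lceil>2 * sqrt (real n - 2) + 1\<rceil>)"
proof (rule antisym)
  obtain k T where "3 \<le> k" "k \<le> n" "n \<le> k + T*(k-2)"
    "k + T = nat \<lceil>2 * sqrt (real n - 2) + 1\<rceil>" using arith_upper[OF assms] by blast
  then show "th_H (cycle_adj n) {..<n} \<le> enat (nat \<lceil>2 * sqrt (real n - 2) + 1\<rceil>)"
    using upper_th by metis
  show "enat (nat \<lceil>2 * sqrt (real n - 2) + 1\<rceil>) \<le> th_H (cycle_adj n) {..<n}"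
    using lower_th[OF assms] .
qed

end
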